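(* Let $F$ be a field, $U,V$ finite-dimensional $F$-vector spaces, $A:U\times U\to V$ an alternating bilinear map whose image spans $V$, $u_1<\dots<u_n$ an ordered basis of $U$, and $\mathcal{B}$, $\mathcal{W}(\mathcal{B})$, $f$, $W(\mathcal{B})$ as in the context. Then (i) the elements $f(\{a,b,c\})$, $\{a,b,c\}\in\mathcal{W}(\mathcal{B})$, are linearly independent in $V\otimes U$ (in particular they are pairwise distinct); and (ii) $f:\mathcal{W}(\mathcal{B})\to W(\mathcal{B})$ is a bijection.
   Context: $\mathcal{Y}$ is the set of $2$-element subsets of $\{1,\dots,n\}$, totally ordered by $\{i,j\}<\{r,s\}$ iff $\max\{i,j\}<\max\{r,s\}$, or the maxima are equal to $a$ and the remaining element of $\{i,j\}\setminus\{a\}$ is smaller than that of $\{r,s\}\setminus\{a\}$. $\mathcal{B}$ is constructed as follows: $\mathcal{B}_0=B_0=\emptyset$; inductively let $\{i,j\}$ ($i<j$) be the least element of $\mathcal{Y}$ with $A(u_i,u_j)\notin\operatorname{span}(B_k)$, and set $\mathcal{B}_{k+1}=\mathcal{B}_k\cup\{\{i,j\}\}$, $B_{k+1}=B_k\cup\{A(u_i,u_j)\}$; stop at $k=m=\dim V$ and put $\mathcal{B}=\mathcal{B}_m$. $\Psi:U\otimes_F U\otimes_F U\to V\otimes_F U$ is the linear map with $\Psi(x\otimes y\otimes z)=A(x,y)\otimes z+A(y,z)\otimes x+A(z,x)\otimes y$. $\mathcal{W}(\mathcal{B})$ is the set of $3$-element subsets of $\{1,\dots,n\}$ containing some $2$-element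 subset belonging to $\mathcal{B}$. For $\{a,b,c\}\in\mathcal{W}(\mathcal{B})$ with elements listed as $i<j<k$, $f(\{a,b,c\})=\Psi(u_i\otimes u_j\otimes u_k)$; $W(\mathcal{B})=f(\mathcal{W}(\mathcal{B}))$. *)

theory Defs
  imports Complex_Main
begin

text \<open>Vector spaces over a field 'f are modelled as types with a scalar
multiplication satisfying the library locale vector_space.
An alternating bilinear map A : U x U -> V.\<close>

definition alt_bilinear ::
  "('f::field \<Rightarrow> 'u::ab_group_add \<Rightarrow> 'u) \<Rightarrow> ('f \<Rightarrow> 'v::ab_group_add \<Rightarrow> 'v)
   \<Rightarrow> ('u \<Rightarrow> 'u \<Rightarrow> 'v) \<Rightarrow> bool" where
  "alt_bilinear sU sV A \<longleftrightarrow>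
     (\<forall>x. Vector_Spaces.linear sU sV (A x)) \<and> (\<forall>y. Vector_Spaces.linear sU sV (\<lambda>x. A x y)) \<and> (\<forall>x. A x x = 0)"

text \<open>tens is a tensor product map V x U -> T (T = V tensor U): it is bilinear,
its image spans T, and for linearly independent B in V and C in U the pure
tensors b (x) c, (b,c) in B x C, are pairwise distinct and linearly independent.
This determines T together with tens up to unique isomorphism.\<close>

definition is_tensor_product ::
  "('f::field \<Rightarrow> 'v::ab_group_add \<Rightarrow> 'v) \<Rightarrow> ('f \<Rightarrow> 'u::ab_group_add \<Rightarrow> 'u)
   \<Rightarrow> ('f \<Rightarrow> 't::ab_group_add \<Rightarrow> 't) \<Rightarrow> ('v \<Rightarrow> 'u \<Rightarrow> 't) \<Rightarrow> bool" where
  "is_tensor_product sV sU sT tens \<longleftrightarrow>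
     vector_space sT \<and>
     (\<forall>v. Vector_Spaces.linear sU sT (tens v)) \<and> (\<forall>x. Vector_Spaces.linear sV sT (\<lambda>v. tens v x)) \<and>
     module.span sT (range (\<lambda>(v, x). tens v x)) = UNIV \<and>
     (\<forall>B C. \<not> module.dependent sV B \<longrightarrow> \<not> module.dependent sU C \<longrightarrow>
        inj_on (\<lambda>(b, c). tens b c) (B \<times> C) \<and>
        \<not> module.dependent sT ((\<lambda>(b, c). tens b c) ` (B \<times> C)))"

definition Ylist :: "nat \<Rightarrow> (nat \<times> nat) list" where
  "Ylist n = concat (map (\<lambda>j. map (\<lambda>i. (i, j)) [1..<j]) [1..<Suc n])"

fun Bseq :: "('f::field \<Rightarrow> 'v::ab_group_add \<Rightarrow> 'v) \<Rightarrow> ('u \<Rightarrow> 'u \<Rightarrow> 'v)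
   \<Rightarrow> (nat \<Rightarrow> 'u) \<Rightarrow> nat \<Rightarrow> nat \<Rightarrow> nat set set" where
  "Bseq sV A u n 0 = {}"
| "Bseq sV A u n (Suc k) =
     (let Bk = Bseq sV A u n k;
          Vk = (\<lambda>P. A (u (Min P)) (u (Max P))) ` Bk;
          (i, j) = hd (filter (\<lambda>(i, j). A (u i) (u j) \<notin> module.span sV Vk) (Ylist n))
      in Bk \<union> {{i, j}})"

definition Bcal :: "('f::field \<Rightarrow> 'v::ab_group_add \<Rightarrow> 'v) \<Rightarrow> ('u \<Rightarrow> 'u \<Rightarrow> 'v)
   \<Rightarrow> (nat \<Rightarrow> 'u) \<Rightarrow> nat \<Rightarrow> nat set set" where
  "Bcal sV A u n = Bseq sV A u n (vector_space.dim sV (UNIV :: 'v set))"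

definition Wcal :: "nat \<Rightarrow> nat set set \<Rightarrow> nat set set" where
  "Wcal n \<B> = {S. S \<subseteq> {1..n} \<and> card S = 3 \<and> (\<exists>P\<in>\<B>. P \<subseteq> S)}"

definition Psi_pure :: "('v \<Rightarrow> 'u \<Rightarrow> 't::ab_group_add) \<Rightarrow> ('u \<Rightarrow> 'u \<Rightarrow> 'v)
   \<Rightarrow> 'u \<Rightarrow> 'u \<Rightarrow> 'u \<Rightarrow> 't" where
  "Psi_pure tens A x y z = tens (A x y) z + tens (A y z) x + tens (A z x) y"

definition fW :: "('v \<Rightarrow> 'u \<Rightarrow> 't::ab_group_add) \<Rightarrow> ('u \<Rightarrow> 'u \<Rightarrow> 'v)
   \<Rightarrow> (nat \<Rightarrow> 'u) \<Rightarrow> nat set \<Rightarrow> 't" where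
  "fW tens A u S = (let l = sorted_list_of_set S in
      Psi_pure tens A (u (l ! 0)) (u (l ! 1)) (u (l ! 2)))"

end

theory Submission
  imports Defs "HOL-Library.Nat_Bijection"
begin

lemma bil_span:
  assumes g1: "\<forall>x. Vector_Spaces.linear s2 s3 (g x)"
    and g2: "\<forall>y. Vector_Spaces.linear s1 s3 (\<lambda>x. g x y)"
    and v: "v \<in> module.span s1 X" and y: "y \<in> module.span s2 Y"
  shows "g v y \<in> module.span s3 ((\<lambda>(a, b). g a b) ` (X \<times> Y))"
proof -
  let ?Z = "(\<lambda>(a, b). g a b) ` (X \<times> Y)"
  have vs3: "vector_space s3" using g1[rule_format, of undefined] by (simp add: Vector_Spaces.linear_def)
  interpret m3: vector_space s3 by (rule vs3)
  have 1: "g a y \<in> m3.span ?Z" if a: "a \<in> X" for a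
  proof -
    have "g a y \<in> g a ` module.span s2 Y" using y by blast
    also have "\<dots> = m3.span (g a ` Y)"
      using module_hom.span_image[OF g1[rule_format, of a, unfolded linear_iff_module_hom]] by simp
    also have "\<dots> \<subseteq> m3.span ?Z" by (rule m3.span_mono) (use a in auto)
    finally show ?thesis .
  qed
  have "g v y \<in> (\<lambda>x. g x y) ` module.span s1 X" using v by blast
  also have "\<dots> = m3.span ((\<lambda>x. g x y) ` X)"
    using module_hom.span_image[OF g2[rule_format, of y, unfolded linear_iff_module_hom]] by simp
  also have "\<dots> \<subseteq> m3.span ?Z"
    by (metis (no_types, lifting) 1 image_subsetI m3.span_minimal m3.subspace_span)
  finally show ?thesis .
qed

lemma (in vector_space) triangular:
  fixes W :: "'i set" and f :: "'i \<Rightarrow> 'b" and lead :: "'i \<Rightarrow> 'b" and mu :: "'i \<Rightarrow> nat"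
  assumes E: "independent E" "span E = UNIV" and fin: "finite W"
    and diag: "\<And>S. S \<in> W \<Longrightarrow> representation E (f S) (lead S) \<noteq> 0"
    and tri: "\<And>S S'. S \<in> W \<Longrightarrow> S' \<in> W \<Longrightarrow> representation E (f S') (lead S) \<noteq> 0
               \<Longrightarrow> S' = S \<or> mu S < mu S'"
  shows "independent (f ` W) \<and> inj_on f W"
proof
  show inj: "inj_on f W"
  proof (rule inj_onI)
    fix S S' assume S: "S \<in> W" "S' \<in> W" "f S = f S'"
    show "S = S'"
    proof (rule ccontr)
      assume ne: "S \<noteq> S'"
      have "mu S < mu S'" using tri[OF S(1,2)] diag[OF S(1)] S(3) ne by auto
      moreover have "mu S' < mu S" using tri[OF S(2,1)] diag[OF S(2)] S(3) ne by auto
      ultimately show False by simp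
    qed
  qed
  show "independent (f ` W)"
    unfolding independent_explicit_module
  proof (intro allI impI)
    fix t c v
    assume t: "finite t" "t \<subseteq> f ` W" and sum0: "(\<Sum>v\<in>t. c v *s v) = 0" and v: "v \<in> t"
    define W0 where "W0 = {S \<in> W. f S \<in> t}"
    have W0: "finite W0" "W0 \<subseteq> W" using fin by (auto simp: W0_def)
    have tW0: "t = f ` W0" using t by (auto simp: W0_def)
    have inj0: "inj_on f W0" using inj W0 inj_on_subset by blast
    have sum0': "(\<Sum>S\<in>W0. c (f S) *s f S) = 0"
      using sum0 unfolding tW0 sum.reindex[OF inj0] by simp
    show "c v = 0"
    proof (rule ccontr)
      assume cv: "c v \<noteq> 0"
      define Z where "Z = {S \<in> W0. c (f S) \<noteq> 0}"
      have Zfin: "finite Z" using W0 by (auto simp: Z_def)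
      have Zne: "Z \<noteq> {}" using v cv tW0 by (auto simp: Z_def)
      have "Max (mu ` Z) \<in> mu ` Z" using Zfin Zne by simp
      then obtain S0 where S0: "S0 \<in> Z" "mu S0 = Max (mu ` Z)" by (metis imageE)
      have maxS0: "mu S \<le> mu S0" if "S \<in> Z" for S using S0 Zfin that by auto
      have S0W: "S0 \<in> W" "S0 \<in> W0" using S0 W0 by (auto simp: Z_def)
      have spanE: "x \<in> span E" for x using E by simp
      have "representation E (\<Sum>S\<in>W0. c (f S) *s f S) (lead S0) =
            (\<Sum>S\<in>W0. c (f S) * representation E (f S) (lead S0))"
        by (simp add: representation_sum[OF E(1)] representation_scale[OF E(1)] spanE)
      also have "\<dots> = c (f S0) * representation E (f S0) (lead S0)"
      proof (rule sum.remove[OF W0(1) S0W(2), THEN trans])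
        have *: "c (f S) * representation E (f S) (lead S0) = 0" if S: "S \<in> W0 - {S0}" for S
        proof (rule ccontr)
          assume "c (f S) * representation E (f S) (lead S0) \<noteq> 0"
          hence "S \<in> Z" "representation E (f S) (lead S0) \<noteq> 0" using S by (auto simp: Z_def)
          with tri[OF S0W(1), of S] maxS0[of S] S W0 show False by auto
        qed
        have "(\<Sum>S\<in>W0 - {S0}. c (f S) * representation E (f S) (lead S0)) = 0"
          by (rule sum.neutral) (use * in blast)
        thus "c (f S0) * representation E (f S0) (lead S0) +
            (\<Sum>S\<in>W0 - {S0}. c (f S) * representation E (f S) (lead S0)) =
            c (f S0) * representation E (f S0) (lead S0)" by simp
      qed
      finally have "c (f S0) * representation E (f S0) (lead S0) = 0"
        using sum0' by (simp add: representation_zero)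
      thus False using diag[OF S0W(1)] S0 by (auto simp: Z_def)
    qed
  qed
qed

lemma Ylist_set: "set (Ylist n) = {(i, j). 1 \<le> i \<and> i < j \<and> j \<le> n}"
proof
  show "set (Ylist n) \<subseteq> {(i, j). 1 \<le> i \<and> i < j \<and> j \<le> n}" by (auto simp: Ylist_def)
  show "{(i, j). 1 \<le> i \<and> i < j \<and> j \<le> n} \<subseteq> set (Ylist n)"
  proof (clarify)
    fix a b assume "1 \<le> a" "a < b" "b \<le> n"
    then show "(a, b) \<in> set (Ylist n)" unfolding Ylist_def
      by (auto intro!: bexI[of _ b] simp: image_iff)
  qed
qed

lemma Ylist_Suc: "Ylist (Suc n) = Ylist n @ map (\<lambda>i. (i, Suc n)) [1..<Suc n]"
  by (simp add: Ylist_def)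

lemma Ylist_sorted: "sorted (map (\<lambda>(i, j). (2::nat) ^ i + 2 ^ j) (Ylist n))"
proof (induction n)
  case 0
  then show ?case by (simp add: Ylist_def)
next
  case (Suc n)
  have a: "sorted (map (\<lambda>(i, j). (2::nat) ^ i + 2 ^ j) (map (\<lambda>i. (i, Suc n)) [1..<Suc n]))"
  proof -
    have "sorted_wrt (<) [1..<Suc n]" by (rule sorted_wrt_upt)
    then have "sorted_wrt (\<lambda>x y. (2::nat) ^ x + 2 ^ Suc n \<le> 2 ^ y + 2 ^ Suc n) [1..<Suc n]"
      by (rule sorted_wrt_mono_rel[rotated]) simp
    then show ?thesis by (simp add: sorted_map o_def)
  qed
  have b: "(2::nat) ^ i + 2 ^ j \<le> 2 ^ i' + 2 ^ Suc n" if "(i, j) \<in> set (Ylist n)" for i j i'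
  proof -
    from that have ij: "i < j" "j \<le> n" by (auto simp: Ylist_set)
    have "(2::nat) ^ i < 2 ^ j" using ij by simp
    moreover have "(2::nat) ^ j \<le> 2 ^ n" using ij by simp
    ultimately have "(2::nat) ^ i + 2 ^ j \<le> 2 ^ Suc n" unfolding power_Suc by linarith
    thus ?thesis by simp
  qed
  show ?case unfolding Ylist_Suc map_append sorted_append
    using Suc a b by auto
qed

lemma hd_filter_min:
  fixes g :: "'a \<Rightarrow> nat"
  assumes "sorted (map g xs)" "filter P xs \<noteq> []"
  shows "hd (filter P xs) \<in> set xs \<and> P (hd (filter P xs)) \<and>
         (\<forall>x\<in>set xs. P x \<longrightarrow> g (hd (filter P xs)) \<le> g x)"
  using assms
proof (induction xs)
  case Nil
  then show ?case by simp
next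
  case (Cons a xs)
  show ?case
  proof (cases "P a")
    case True
    then show ?thesis using Cons.prems by auto
  next
    case False
    then show ?thesis using Cons by auto
  qed
qed

lemma set_encode_pair: "i \<noteq> j \<Longrightarrow> set_encode {i, j} = 2 ^ i + 2 ^ j"
  by simp

lemma order_lemma:
  assumes "finite P" "finite Q" "k \<notin> P" "k \<notin> Q" "set_encode P \<le> set_encode Q"
  shows "insert k P = insert k Q \<or> set_encode (insert k P) < set_encode (insert k Q)"
proof (cases "P = Q")
  case False
  then have "set_encode P \<noteq> set_encode Q" using assms by (simp add: set_encode_eq)
  then show ?thesis using assms by simp
qed simp

locale p27 =
  fixes sU :: "'f::field \<Rightarrow> 'u::ab_group_add \<Rightarrow> 'u"
    and sV :: "'f \<Rightarrow> 'v::ab_group_add \<Rightarrow> 'v"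
    and sT :: "'f \<Rightarrow> 't::ab_group_add \<Rightarrow> 't"
    and tens :: "'v \<Rightarrow> 'u \<Rightarrow> 't"
    and A :: "'u \<Rightarrow> 'u \<Rightarrow> 'v"
    and u :: "nat \<Rightarrow> 'u"
    and n :: nat
  assumes U: "vector_space sU"
    and V: "vector_space sV"
    and Vfin: "\<exists>S. finite S \<and> module.span sV S = UNIV"
    and basis_inj: "inj_on u {1..n}"
    and basis_indep: "\<not> module.dependent sU (u ` {1..n})"
    and basis_span: "module.span sU (u ` {1..n}) = UNIV"
    and A_alt: "alt_bilinear sU sV A"
    and A_span: "module.span sV (range (\<lambda>(x, y). A x y)) = UNIV"
    and T: "is_tensor_product sV sU sT tens"
begin

sublocale vU: vector_space sU by (rule U)
sublocale vV: vector_space sV by (rule V)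
sublocale vT: vector_space sT using T by (simp add: is_tensor_product_def)

definition bv :: "nat set \<Rightarrow> 'v" where "bv P = A (u (Min P)) (u (Max P))"
definition Pr :: "nat set set" where "Pr = {{i, j} | i j. 1 \<le> i \<and> i < j \<and> j \<le> n}"
abbreviation m where "m \<equiv> vV.dim (UNIV :: 'v set)"
abbreviation Bk where "Bk k \<equiv> Bseq sV A u n k"

lemma A_lin1: "Vector_Spaces.linear sU sV (A x)" using A_alt by (simp add: alt_bilinear_def)
lemma A_lin2: "Vector_Spaces.linear sU sV (\<lambda>x. A x y)" using A_alt by (simp add: alt_bilinear_def)
lemma A_add1: "A x (y + z) = A x y + A x z"
  using A_lin1[of x] by (simp add: Vector_Spaces.linear_iff)
lemma A_add2: "A (x + y) z = A x z + A y z"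
  using A_lin2[of z] by (simp add: Vector_Spaces.linear_iff)
lemma A_diag: "A x x = 0" using A_alt by (simp add: alt_bilinear_def)
lemma A_antisym: "A y x = - A x y"
proof -
  have "0 = A (x + y) (x + y)" by (simp add: A_diag)
  also have "\<dots> = A x y + A y x" by (subst A_add1, subst A_add2, subst A_add2, simp add: A_diag)
  finally show ?thesis by (metis add.commute eq_neg_iff_add_eq_0)
qed

lemma bv_pair: "i < j \<Longrightarrow> bv {i, j} = A (u i) (u j)"
  by (simp add: bv_def)

lemma Pr_iff: "Q \<in> Pr \<longleftrightarrow> (\<exists>i j. Q = {i, j} \<and> 1 \<le> i \<and> i < j \<and> j \<le> n)"
  by (auto simp: Pr_def)

lemma A_in_span: "i \<in> {1..n} \<Longrightarrow> j \<in> {1..n} \<Longrightarrow> A (u i) (u j) \<in> vV.span (bv ` Pr)"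
proof -
  assume ij: "i \<in> {1..n}" "j \<in> {1..n}"
  consider "i = j" | "i < j" | "j < i" by linarith
  then show ?thesis
  proof cases
    case 1 then show ?thesis by (simp add: A_diag vV.span_zero)
  next
    case 2
    then have "{i, j} \<in> Pr" using ij by (auto simp: Pr_def)
    then show ?thesis using 2 by (metis bv_pair imageI vV.span_base)
  next
    case 3
    then have "{j, i} \<in> Pr" using ij by (auto simp: Pr_def)
    then have "A (u j) (u i) \<in> vV.span (bv ` Pr)" using 3 by (metis bv_pair imageI vV.span_base)
    then show ?thesis by (metis A_antisym vV.span_neg)
  qed
qed

lemma span_Pr: "vV.span (bv ` Pr) = UNIV"
proof -
  have "A x y \<in> vV.span (bv ` Pr)" for x y
  proof -
    have "A x y \<in> vV.span ((\<lambda>(a, b). A a b) ` (u ` {1..n} \<times> u ` {1..n}))"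
      by (rule bil_span) (use A_lin1 A_lin2 basis_span in auto)
    also have "\<dots> \<subseteq> vV.span (bv ` Pr)"
      by (rule vV.span_minimal) (auto simp: A_in_span)
    finally show ?thesis .
  qed
  then have "range (\<lambda>(x, y). A x y) \<subseteq> vV.span (bv ` Pr)" by auto
  then have "vV.span (range (\<lambda>(x, y). A x y)) \<subseteq> vV.span (bv ` Pr)"
    by (rule vV.span_minimal) simp
  then show ?thesis using A_span by auto
qed

lemma finite_Pr: "finite Pr"
proof -
  have "Pr \<subseteq> Pow {1..n}" by (auto simp: Pr_def)
  then show ?thesis by (rule finite_subset) simp
qed

lemma indep_card_le: "vV.independent X \<Longrightarrow> finite X \<and> card X \<le> m"
proof -
  assume X: "vV.independent X"
  obtain S where S: "finite S" "vV.span S = UNIV" using Vfin by auto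
  obtain B0 where B0: "vV.independent B0" "UNIV \<subseteq> vV.span B0" "card B0 = m"
    using vV.basis_exists[of UNIV] by metis
  have "finite B0" using vV.independent_span_bound[OF S(1) B0(1)] S(2) by auto
  then show ?thesis using vV.independent_span_bound[OF _ X, of B0] B0 by auto
qed

lemma Bseq_Suc_eq: "Bk (Suc k) = insert {fst (hd (filter (\<lambda>(i, j). A (u i) (u j) \<notin> vV.span (bv ` Bk k)) (Ylist n))),
                                       snd (hd (filter (\<lambda>(i, j). A (u i) (u j) \<notin> vV.span (bv ` Bk k)) (Ylist n)))} (Bk k)"
  by (simp add: Let_def split_def bv_def[abs_def])

end

context p27 begin
declare Bseq.simps(2)[simp del]

definition Inv :: "nat \<Rightarrow> bool" where
  "Inv k \<longleftrightarrow> finite (Bk k) \<and> card (Bk k) = k \<and> Bk k \<subseteq> Pr \<and> inj_on bv (Bk k) \<and>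
     vV.independent (bv ` Bk k) \<and>
     (\<forall>Q\<in>Pr. bv Q \<in> vV.span (bv ` Bk k) \<longrightarrow> bv Q \<in> vV.span (bv ` {P \<in> Bk k. set_encode P \<le> set_encode Q})) \<and>
     (\<forall>Q\<in>Pr. bv Q \<notin> vV.span (bv ` Bk k) \<longrightarrow> (\<forall>P\<in>Bk k. set_encode P \<le> set_encode Q))"

lemma Inv_all: "k \<le> m \<Longrightarrow> Inv k"
proof (induction k)
  case 0
  then show ?case unfolding Inv_def using vV.independent_empty by simp
next
  case (Suc k)
  then have IH: "Inv k" and km: "k < m" by auto
  let ?S = "vV.span (bv ` Bk k)"
  let ?p = "\<lambda>(i, j). A (u i) (u j) \<notin> ?S"
  let ?fl = "filter ?p (Ylist n)"
  have fin: "finite (Bk k)" and cardk: "card (Bk k) = k" and sub: "Bk k \<subseteq> Pr"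
    and inj: "inj_on bv (Bk k)" and ind: "vV.independent (bv ` Bk k)"
    and I1: "\<forall>Q\<in>Pr. bv Q \<in> ?S \<longrightarrow> bv Q \<in> vV.span (bv ` {P \<in> Bk k. set_encode P \<le> set_encode Q})"
    and I2: "\<forall>Q\<in>Pr. bv Q \<notin> ?S \<longrightarrow> (\<forall>P\<in>Bk k. set_encode P \<le> set_encode Q)"
    using IH by (auto simp: Inv_def)
  have ne: "?fl \<noteq> []"
  proof
    assume "?fl = []"
    then have "\<forall>x\<in>set (Ylist n). \<not> ?p x" by (simp add: filter_empty_conv)
    then have "bv ` Pr \<subseteq> ?S" by (auto simp: Pr_def Ylist_set bv_pair)
    then have "vV.span (bv ` Pr) \<subseteq> ?S" by (rule vV.span_minimal) simp
    then have "UNIV \<subseteq> ?S" by (simp add: span_Pr)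
    then have "m \<le> card (bv ` Bk k)" using vV.dim_le_card[of UNIV "bv ` Bk k"] fin by blast
    also have "\<dots> \<le> k" using card_image_le[OF fin, of bv] cardk by linarith
    finally show False using km by linarith
  qed
  obtain i j where hij: "hd ?fl = (i, j)" by (metis surj_pair)
  have H: "hd ?fl \<in> set (Ylist n) \<and> ?p (hd ?fl) \<and>
         (\<forall>x\<in>set (Ylist n). ?p x \<longrightarrow> (\<lambda>(i, j). (2::nat) ^ i + 2 ^ j) (hd ?fl) \<le> (\<lambda>(i, j). (2::nat) ^ i + 2 ^ j) x)"
    by (rule hd_filter_min[OF Ylist_sorted ne])
  have ij: "1 \<le> i" "i < j" "j \<le> n" using H hij by (auto simp: Ylist_set)
  define N where "N = {i, j}"
  have NPr: "N \<in> Pr" using ij by (auto simp: Pr_def N_def)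
  have bvN: "bv N = A (u i) (u j)" using ij by (simp add: N_def bv_pair)
  have Nout: "bv N \<notin> ?S" using H hij bvN by auto
  have eq: "Bk (Suc k) = insert N (Bk k)" using Bseq_Suc_eq[of k] hij by (simp add: N_def)
  have NnB: "N \<notin> Bk k" using Nout by (metis imageI vV.span_base)
  have wN: "set_encode N \<le> set_encode Q" if Q: "Q \<in> Pr" "bv Q \<notin> ?S" for Q
  proof -
    obtain a b where ab: "Q = {a, b}" "1 \<le> a" "a < b" "b \<le> n" using Q(1) by (auto simp: Pr_def)
    have "(a, b) \<in> set (Ylist n)" using ab by (simp add: Ylist_set)
    moreover have "?p (a, b)" using Q(2) ab by (simp add: bv_pair)
    ultimately have "(2::nat) ^ i + 2 ^ j \<le> 2 ^ a + 2 ^ b" using H hij by fastforce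
    then show ?thesis using ab ij by (simp add: N_def)
  qed
  have img: "bv ` Bk (Suc k) = insert (bv N) (bv ` Bk k)" by (simp add: eq)
  show ?case unfolding Inv_def
  proof (intro conjI ballI impI)
    show "finite (Bk (Suc k))" using fin eq by simp
    show "card (Bk (Suc k)) = Suc k" using fin eq NnB cardk by simp
    show "Bk (Suc k) \<subseteq> Pr" using sub eq NPr by simp
    show "inj_on bv (Bk (Suc k))" using inj eq Nout by (auto intro: vV.span_base)
    show "vV.independent (bv ` Bk (Suc k))" unfolding img using ind Nout
      by (simp add: vV.independent_insertI)
  next
    fix Q assume Q: "Q \<in> Pr" and inS: "bv Q \<in> vV.span (bv ` Bk (Suc k))"
    show "bv Q \<in> vV.span (bv ` {P \<in> Bk (Suc k). set_encode P \<le> set_encode Q})"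
    proof (cases "bv Q \<in> ?S")
      case True
      then have "bv Q \<in> vV.span (bv ` {P \<in> Bk k. set_encode P \<le> set_encode Q})" using I1 Q by blast
      moreover have "vV.span (bv ` {P \<in> Bk k. set_encode P \<le> set_encode Q}) \<subseteq>
          vV.span (bv ` {P \<in> Bk (Suc k). set_encode P \<le> set_encode Q})"
        by (rule vV.span_mono) (auto simp: eq)
      ultimately show ?thesis by blast
    next
      case False
      then have "{P \<in> Bk (Suc k). set_encode P \<le> set_encode Q} = Bk (Suc k)"
        using I2 Q wN eq by auto
      then show ?thesis using inS by simp
    qed
  next
    fix Q P assume Q: "Q \<in> Pr" and nS: "bv Q \<notin> vV.span (bv ` Bk (Suc k))" and P: "P \<in> Bk (Suc k)"
    have "bv Q \<notin> ?S" using nS vV.span_mono[of "bv ` Bk k" "bv ` Bk (Suc k)"] eq by auto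
    then show "set_encode P \<le> set_encode Q" using I2 Q wN P eq by auto
  qed
qed

end

context p27 begin

abbreviation BB where "BB \<equiv> Bcal sV A u n"
abbreviation Bv where "Bv \<equiv> bv ` BB"
abbreviation rV where "rV \<equiv> vV.representation Bv"

lemma BB_eq: "BB = Bk m" by (simp add: Bcal_def)

lemma BB_props: "finite BB" "card BB = m" "BB \<subseteq> Pr" "inj_on bv BB" "vV.independent Bv"
  and BB_I1: "\<And>Q. Q \<in> Pr \<Longrightarrow> bv Q \<in> vV.span Bv \<Longrightarrow> bv Q \<in> vV.span (bv ` {P \<in> BB. set_encode P \<le> set_encode Q})"
  using Inv_all[of m] unfolding BB_eq Inv_def by auto

lemma BB_spans_Pr: "Q \<in> Pr \<Longrightarrow> bv Q \<in> vV.span Bv"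
proof (rule ccontr)
  assume Q: "Q \<in> Pr" and nQ: "bv Q \<notin> vV.span Bv"
  have "vV.independent (insert (bv Q) Bv)" using BB_props(5) nQ by (simp add: vV.independent_insertI)
  then have c: "card (insert (bv Q) Bv) \<le> m" using indep_card_le by blast
  have "bv Q \<notin> Bv" using nQ vV.span_base by blast
  then have "card (insert (bv Q) Bv) = Suc (card Bv)" using BB_props(1) by simp
  also have "card Bv = m" using BB_props(1,2,4) by (simp add: card_image)
  finally show False using c by simp
qed

lemma span_Bv: "vV.span Bv = UNIV"
proof -
  have "bv ` Pr \<subseteq> vV.span Bv" using BB_spans_Pr by blast
  then have "vV.span (bv ` Pr) \<subseteq> vV.span Bv" by (rule vV.span_minimal) simp
  then show ?thesis using span_Pr by auto
qed

lemma R1: "Q \<in> Pr \<Longrightarrow> P \<in> BB \<Longrightarrow> rV (bv Q) (bv P) \<noteq> 0 \<Longrightarrow> set_encode P \<le> set_encode Q"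
proof -
  assume Q: "Q \<in> Pr" and P: "P \<in> BB" and nz: "rV (bv Q) (bv P) \<noteq> 0"
  let ?B' = "bv ` {P \<in> BB. set_encode P \<le> set_encode Q}"
  have inS: "bv Q \<in> vV.span ?B'" using BB_I1[OF Q BB_spans_Pr[OF Q]] .
  have "rV (bv Q) = vV.representation ?B' (bv Q)"
    by (rule vV.representation_extend[OF BB_props(5) inS]) auto
  then have "vV.representation ?B' (bv Q) (bv P) \<noteq> 0" using nz by simp
  then have "bv P \<in> ?B'" by (rule vV.representation_ne_zero)
  then obtain P' where P': "P' \<in> BB" "set_encode P' \<le> set_encode Q" "bv P = bv P'" by auto
  then have "P' = P" using BB_props(4) P by (metis inj_onD)
  then show ?thesis using P' by simp
qed

lemma R2: "P \<in> BB \<Longrightarrow> rV (bv P) (bv P) = 1"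
  using vV.representation_basis[OF BB_props(5)] by simp

definition E where "E = (\<lambda>(b, c). tens b c) ` (Bv \<times> u ` {1..n})"

lemma tens_lin1: "Vector_Spaces.linear sU sT (tens v)" using T by (simp add: is_tensor_product_def)
lemma tens_lin2: "Vector_Spaces.linear sV sT (\<lambda>v. tens v x)" using T by (simp add: is_tensor_product_def)

lemma E_props: "vT.independent E" "inj_on (\<lambda>(b, c). tens b c) (Bv \<times> u ` {1..n})"
  using T BB_props(5) basis_indep unfolding is_tensor_product_def E_def by auto

lemma span_E: "vT.span E = UNIV"
proof -
  have "tens v x \<in> vT.span E" for v x
    unfolding E_def
    by (rule bil_span) (use tens_lin1 tens_lin2 span_Bv basis_span in auto)
  then have "range (\<lambda>(v, x). tens v x) \<subseteq> vT.span E" by auto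
  then have "vT.span (range (\<lambda>(v, x). tens v x)) \<subseteq> vT.span E"
    by (rule vT.span_minimal) simp
  then show ?thesis using T unfolding is_tensor_product_def by auto
qed

lemma RT:
  assumes P: "P \<in> BB" and k: "k \<in> {1..n}" and z: "z \<in> {1..n}"
  shows "vT.representation E (tens v (u z)) (tens (bv P) (u k)) = (if z = k then rV v (bv P) else 0)"
proof -
  have finBv: "finite Bv" using BB_props(1) by simp
  define s where "s = (\<Sum>b\<in>Bv. sV (rV v b) b)"
  have v: "v = s" unfolding s_def
    using vV.sum_representation_eq[OF BB_props(5) _ finBv subset_refl, of v] span_Bv by simp
  interpret L: Vector_Spaces.linear sV sT "\<lambda>v. tens v (u z)" by (rule tens_lin2)
  have t: "tens v (u z) = (\<Sum>b\<in>Bv. sT (rV v b) (tens b (u z)))"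
  proof -
    have "tens v (u z) = tens s (u z)" using v by simp
    also have "\<dots> = (\<Sum>b\<in>Bv. tens (sV (rV v b) b) (u z))" unfolding s_def by (rule L.sum)
    also have "\<dots> = (\<Sum>b\<in>Bv. sT (rV v b) (tens b (u z)))" by (simp add: L.scale)
    finally show ?thesis .
  qed
  have inE: "tens b (u z) \<in> E" if "b \<in> Bv" for b using that z by (force simp: E_def)
  have PE: "bv P \<in> Bv" using P by simp
  have eqiff: "tens (bv P) (u k) = tens b (u z) \<longleftrightarrow> b = bv P \<and> z = k" if b: "b \<in> Bv" for b
  proof
    assume "tens (bv P) (u k) = tens b (u z)"
    then have "bv P = b \<and> u k = u z"
      using inj_onD[OF E_props(2), of "(bv P, u k)" "(b, u z)"] PE b k z by auto
    then show "b = bv P \<and> z = k" using inj_onD[OF basis_inj, of k z] k z by auto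
  qed auto
  have "vT.representation E (tens v (u z)) (tens (bv P) (u k)) =
        (\<Sum>b\<in>Bv. rV v b * vT.representation E (tens b (u z)) (tens (bv P) (u k)))"
    unfolding t
    by (simp add: vT.representation_sum[OF E_props(1)] vT.representation_scale[OF E_props(1)] span_E)
  also have "\<dots> = (\<Sum>b\<in>Bv. if b = bv P then (if z = k then rV v b else 0) else 0)"
    by (rule sum.cong) (auto simp: vT.representation_basis[OF E_props(1) inE] eqiff)
  also have "\<dots> = (if z = k then rV v (bv P) else 0)" using finBv PE by simp
  finally show ?thesis .
qed

end

context p27 begin

definition R where "R x y P = rV (A (u x) (u y)) (bv P)"

lemma R1': assumes "x \<in> {1..n}" "y \<in> {1..n}" "x \<noteq> y" "P \<in> BB" "R x y P \<noteq> 0"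
  shows "set_encode P \<le> set_encode {x, y}"
proof (cases "x < y")
  case True
  then have "{x, y} \<in> Pr" using assms by (auto simp: Pr_def)
  then show ?thesis using R1[of "{x, y}" P] assms True by (simp add: R_def bv_pair)
next
  case False
  then have yx: "y < x" using assms by simp
  then have Q: "{y, x} \<in> Pr" using assms by (auto simp: Pr_def)
  have "A (u x) (u y) = - bv {y, x}" using yx by (simp add: bv_pair A_antisym[of "u x" "u y"])
  then have "R x y P = - rV (bv {y, x}) (bv P)"
    by (simp add: R_def vV.representation_neg[OF BB_props(5)] span_Bv)
  then have "rV (bv {y, x}) (bv P) \<noteq> 0" using assms by simp
  then show ?thesis using R1[OF Q assms(4)] by (simp add: insert_commute)
qed

lemma R2': assumes "x \<noteq> y" "{x, y} \<in> BB" shows "R x y {x, y} \<noteq> 0"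
proof (cases "x < y")
  case True
  then show ?thesis using R2[OF assms(2)] by (simp add: R_def bv_pair)
next
  case False
  then have yx: "y < x" using assms by simp
  have "A (u x) (u y) = - bv {y, x}" using yx by (simp add: bv_pair A_antisym[of "u x" "u y"])
  then have "R x y {x, y} = - rV (bv {y, x}) (bv {x, y})"
    by (simp add: R_def vV.representation_neg[OF BB_props(5)] span_Bv)
  then show ?thesis using R2[OF assms(2)] by (simp add: insert_commute)
qed

abbreviation WW where "WW \<equiv> Wcal n BB"

lemma LS: assumes "S \<in> WW"
  shows "\<exists>a b c. sorted_list_of_set S = [a, b, c] \<and> a < b \<and> b < c \<and> S = {a, b, c} \<and>
     a \<in> {1..n} \<and> b \<in> {1..n} \<and> c \<in> {1..n}"
proof -
  have S: "S \<subseteq> {1..n}" "card S = 3" using assms by (auto simp: Wcal_def)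
  have fin: "finite S" using S(1) finite_subset by blast
  let ?l = "sorted_list_of_set S"
  have len: "length ?l = 3" using S by simp
  have st: "sorted_wrt (<) ?l" by (rule strict_sorted_list_of_set)
  have st2: "set ?l = S" using fin by simp
  have "\<exists>a b c. xs = [a, b, c]" if "length xs = 3" for xs :: "nat list"
    using that by (auto simp: numeral_3_eq_3 length_Suc_conv)
  then obtain a b c where l: "?l = [a, b, c]" using len by blast
  have abc: "a < b" "b < c" using st unfolding l by simp_all
  have Seq: "S = {a, b, c}" using st2 unfolding l by simp
  have mem: "a \<in> {1..n}" "b \<in> {1..n}" "c \<in> {1..n}" using S(1) unfolding Seq by auto
  show ?thesis using l abc Seq mem by blast
qed

lemma fW_eq: "sorted_list_of_set S = [a, b, c] \<Longrightarrow>
  fW tens A u S = tens (A (u a) (u b)) (u c) + tens (A (u b) (u c)) (u a) + tens (A (u c) (u a)) (u b)"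
  by (simp add: fW_def Psi_pure_def)

lemma CF:
  assumes l: "sorted_list_of_set S' = [a, b, c]" and abc: "a \<in> {1..n}" "b \<in> {1..n}" "c \<in> {1..n}"
    and P: "P \<in> BB" and k: "k \<in> {1..n}"
  shows "vT.representation E (fW tens A u S') (tens (bv P) (u k)) =
     (if c = k then R a b P else 0) + (if a = k then R b c P else 0) + (if b = k then R c a P else 0)"
  unfolding fW_eq[OF l]
  by (simp add: vT.representation_add[OF E_props(1)] span_E RT[OF P k abc(1)] RT[OF P k abc(2)]
      RT[OF P k abc(3)] R_def)

definition PS where "PS S = (SOME P. P \<in> BB \<and> P \<subseteq> S)"
definition kS where "kS S = (SOME k. k \<in> S \<and> k \<notin> PS S)"

lemma lead_props: assumes "S \<in> WW"
  shows "PS S \<in> BB" "kS S \<notin> PS S" "insert (kS S) (PS S) = S" "kS S \<in> {1..n}"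
proof -
  have S: "S \<subseteq> {1..n}" "card S = 3" "\<exists>P\<in>BB. P \<subseteq> S" using assms by (auto simp: Wcal_def)
  have fin: "finite S" using S(1) finite_subset by blast
  have ex: "\<exists>P. P \<in> BB \<and> P \<subseteq> S" using S(3) by blast
  have P: "PS S \<in> BB \<and> PS S \<subseteq> S" unfolding PS_def by (rule someI_ex[OF ex])
  then show "PS S \<in> BB" by simp
  have "PS S \<in> Pr" using P BB_props(3) by auto
  then have c2: "card (PS S) = 2" by (auto simp: Pr_def)
  have "card (S - PS S) = 1" using P fin S(2) c2 card_Diff_subset[of "PS S" S] finite_subset[of "PS S" S] by simp
  then obtain k where k: "S - PS S = {k}" by (rule card_1_singletonE)
  have kk: "kS S = k" unfolding kS_def using k by auto
  show "kS S \<notin> PS S" using k kk by auto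
  show "insert (kS S) (PS S) = S" using k kk P by auto
  show "kS S \<in> {1..n}" using k kk S(1) by auto
qed

end

context p27 begin

definition lead where "lead S = tens (bv (PS S)) (u (kS S))"

lemma diag: assumes S: "S \<in> WW" shows "vT.representation E (fW tens A u S) (lead S) \<noteq> 0"
proof -
  obtain a b c where l: "sorted_list_of_set S = [a, b, c]" and abc: "a < b" "b < c" "S = {a, b, c}"
    and mem: "a \<in> {1..n}" "b \<in> {1..n}" "c \<in> {1..n}" using LS[OF S] by blast
  let ?k = "kS S" and ?P = "PS S"
  note P = lead_props[OF S]
  have Peq: "?P = S - {?k}" using P by auto
  have val: "vT.representation E (fW tens A u S) (lead S) =
     (if c = ?k then R a b ?P else 0) + (if a = ?k then R b c ?P else 0) + (if b = ?k then R c a ?P else 0)"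
    unfolding lead_def by (rule CF[OF l mem P(1) P(4)])
  have "?k \<in> {a, b, c}" using P abc by auto
  then consider "?k = a" | "?k = b" | "?k = c" by auto
  then show ?thesis
  proof cases
    case 1
    then have "?P = {a, b, c} - {a}" using Peq abc(3) by simp
    also have "\<dots> = {b, c}" using abc(1,2) by auto
    finally have Pe: "?P = {b, c}" .
    have "R b c {b, c} \<noteq> 0" using R2'[of b c] P(1) Pe abc(1,2) by simp
    then show ?thesis using val 1 abc(1,2) Pe by simp
  next
    case 2
    then have "?P = {a, b, c} - {b}" using Peq abc(3) by simp
    also have "\<dots> = {c, a}" using abc(1,2) by auto
    finally have Pe: "?P = {c, a}" .
    have "R c a {c, a} \<noteq> 0" using R2'[of c a] P(1) Pe abc(1,2) by simp
    then show ?thesis using val 2 abc(1,2) Pe by simp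
  next
    case 3
    then have "?P = {a, b, c} - {c}" using Peq abc(3) by simp
    also have "\<dots> = {a, b}" using abc(1,2) by auto
    finally have Pe: "?P = {a, b}" .
    have "R a b {a, b} \<noteq> 0" using R2'[of a b] P(1) Pe abc(1,2) by simp
    then show ?thesis using val 3 abc(1,2) Pe by simp
  qed
qed

lemma tri: assumes S: "S \<in> WW" and S': "S' \<in> WW"
  and nz: "vT.representation E (fW tens A u S') (lead S) \<noteq> 0"
  shows "S' = S \<or> set_encode S < set_encode S'"
proof -
  obtain a b c where l: "sorted_list_of_set S' = [a, b, c]" and abc: "a < b" "b < c" "S' = {a, b, c}"
    and mem: "a \<in> {1..n}" "b \<in> {1..n}" "c \<in> {1..n}" using LS[OF S'] by blast
  let ?k = "kS S" and ?P = "PS S"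
  note P = lead_props[OF S]
  have finP: "finite ?P" using P(1) BB_props(3) by (auto simp: Pr_def)
  have val: "vT.representation E (fW tens A u S') (lead S) =
     (if c = ?k then R a b ?P else 0) + (if a = ?k then R b c ?P else 0) + (if b = ?k then R c a ?P else 0)"
    unfolding lead_def by (rule CF[OF l mem P(1) P(4)])
  have gen: "S' = S \<or> set_encode S < set_encode S'"
    if xy: "x \<in> {1..n}" "y \<in> {1..n}" "x \<noteq> y" "?k \<notin> {x, y}" "insert ?k {x, y} = S'" "R x y ?P \<noteq> 0"
    for x y
  proof -
    have "set_encode ?P \<le> set_encode {x, y}" by (rule R1'[OF xy(1,2,3) P(1) xy(6)])
    then have "insert ?k ?P = insert ?k {x, y} \<or> set_encode (insert ?k ?P) < set_encode (insert ?k {x, y})"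
      using order_lemma[OF finP _ P(2) xy(4)] by simp
    then show ?thesis unfolding P(3) xy(5) by blast
  qed
  have "(c = ?k \<and> R a b ?P \<noteq> 0) \<or> (a = ?k \<and> R b c ?P \<noteq> 0) \<or> (b = ?k \<and> R c a ?P \<noteq> 0)"
  proof -
    have d: "a \<noteq> c" "a \<noteq> b" "b \<noteq> c" using abc(1,2) by simp_all
    show ?thesis using nz d unfolding val by (cases "c = ?k"; cases "a = ?k"; cases "b = ?k"; simp)
  qed
  then consider "c = ?k" "R a b ?P \<noteq> 0" | "a = ?k" "R b c ?P \<noteq> 0" | "b = ?k" "R c a ?P \<noteq> 0"
    by blast
  then show ?thesis
  proof cases
    case 1
    have e: "insert ?k {a, b} = S'" unfolding abc(3) 1(1)[symmetric] by auto
    have d: "c \<noteq> a" "c \<noteq> b" "a \<noteq> b" using abc(1,2) by simp_all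
    show ?thesis by (rule gen[OF _ _ _ _ e 1(2)]) (use mem d 1(1) in auto)
  next
    case 2
    have e: "insert ?k {b, c} = S'" unfolding abc(3) 2(1)[symmetric] by auto
    have d: "a \<noteq> b" "a \<noteq> c" "b \<noteq> c" using abc(1,2) by simp_all
    show ?thesis by (rule gen[OF _ _ _ _ e 2(2)]) (use mem d 2(1) in auto)
  next
    case 3
    have e: "insert ?k {c, a} = S'" unfolding abc(3) 3(1)[symmetric] by auto
    have d: "b \<noteq> c" "b \<noteq> a" "c \<noteq> a" using abc(1,2) by simp_all
    show ?thesis by (rule gen[OF _ _ _ _ e 3(2)]) (use mem d 3(1) in auto)
  qed
qed

lemma finite_WW: "finite WW"
proof -
  have "WW \<subseteq> Pow {1..n}" by (auto simp: Wcal_def)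
  then show ?thesis by (rule finite_subset) simp
qed

lemma main: "\<not> module.dependent sT (fW tens A u ` WW) \<and> inj_on (fW tens A u) WW
   \<and> bij_betw (fW tens A u) WW (fW tens A u ` WW)"
proof -
  have "vT.independent (fW tens A u ` WW) \<and> inj_on (fW tens A u) WW"
    apply (rule vT.triangular[OF E_props(1) span_E finite_WW, where lead = lead and mu = set_encode])
     apply (erule diag)
    apply (rule tri; assumption)
    done
  then show ?thesis by (simp add: inj_on_imp_bij_betw)
qed

end

theorem proposition2p7:
  fixes sU :: "'f::field \<Rightarrow> 'u::ab_group_add \<Rightarrow> 'u"
    and sV :: "'f \<Rightarrow> 'v::ab_group_add \<Rightarrow> 'v"
    and sT :: "'f \<Rightarrow> 't::ab_group_add \<Rightarrow> 't"
    and tens :: "'v \<Rightarrow> 'u \<Rightarrow> 't"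
    and A :: "'u \<Rightarrow> 'u \<Rightarrow> 'v"
    and u :: "nat \<Rightarrow> 'u"
    and n :: nat
  assumes U: "vector_space sU"
    and V: "vector_space sV"
    and Vfin: "\<exists>S. finite S \<and> module.span sV S = UNIV"
    and basis_inj: "inj_on u {1..n}"
    and basis_indep: "\<not> module.dependent sU (u ` {1..n})"
    and basis_span: "module.span sU (u ` {1..n}) = UNIV"
    and A_alt: "alt_bilinear sU sV A"
    and A_span: "module.span sV (range (\<lambda>(x, y). A x y)) = UNIV"
    and T: "is_tensor_product sV sU sT tens"
  shows "\<not> module.dependent sT (fW tens A u ` Wcal n (Bcal sV A u n))
         \<and> inj_on (fW tens A u) (Wcal n (Bcal sV A u n))
         \<and> bij_betw (fW tens A u) (Wcal n (Bcal sV A u n))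
                                  (fW tens A u ` Wcal n (Bcal sV A u n))"
proof -
  interpret p27 sU sV sT tens A u n
    by (rule p27.intro) (rule assms)+
  show ?thesis by (rule main)
qed

end
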